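(* Consider the directed graph on a finite action space $X$ (with $|X|\ge2$) in which there is an edge $a\to b$ exactly when $a$ and $b$ differ in the action of a single player $i$, with resistance $R_{a\to b}=\max\{0,U_i(a)-U_i(b)\}$. Among all spanning trees rooted at any state of $X$, any tree of minimum total resistance contains an edge of resistance zero.
   Context: Finite game with players $\mathcal{D}$, finite action sets $X_i$, $X=\prod_iX_i$, and real utilities $U_i:X\to\mathbb{R}$. A spanning tree rooted at $c\in X$ is a set of edges of the graph such that every state other than $c$ has exactly one outgoing edge, $c$ has none, and from every state the edges lead to $c$. The total resistance of a tree is the sum of the resistances of its edges. *)

theory Defs
  imports Complex_Main "HOL-Library.FuncSet"
begin

text \<open>Players form a finite set D; player i has action set A i; a state (action
profile) is an element of the product X = PiE D A.\<close>

definition is_edge :: "'p set \<Rightarrow> ('p \<Rightarrow> 'a set) \<Rightarrow> ('p \<Rightarrow> 'a) \<Rightarrow> ('p \<Rightarrow> 'a) \<Rightarrow> bool" where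
  "is_edge D A a b \<longleftrightarrow> a \<in> PiE D A \<and> b \<in> PiE D A \<and>
     (\<exists>i\<in>D. a i \<noteq> b i \<and> (\<forall>j\<in>D. j \<noteq> i \<longrightarrow> a j = b j))"

definition dev_player :: "'p set \<Rightarrow> ('p \<Rightarrow> 'a) \<Rightarrow> ('p \<Rightarrow> 'a) \<Rightarrow> 'p" where
  "dev_player D a b = (THE i. i \<in> D \<and> a i \<noteq> b i)"

definition resistance :: "'p set \<Rightarrow> ('p \<Rightarrow> ('p \<Rightarrow> 'a) \<Rightarrow> real) \<Rightarrow> ('p \<Rightarrow> 'a) \<Rightarrow> ('p \<Rightarrow> 'a) \<Rightarrow> real" where
  "resistance D U a b = max 0 (U (dev_player D a b) a - U (dev_player D a b) b)"

definition spanning_tree :: "'p set \<Rightarrow> ('p \<Rightarrow> 'a set) \<Rightarrow> ('p \<Rightarrow> 'a) \<Rightarrow> (('p \<Rightarrow> 'a) \<times> ('p \<Rightarrow> 'a)) set \<Rightarrow> bool" where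
  "spanning_tree D A c T \<longleftrightarrow> c \<in> PiE D A \<and>
     (\<forall>(a,b)\<in>T. is_edge D A a b) \<and>
     (\<forall>a\<in>PiE D A - {c}. \<exists>!b. (a, b) \<in> T) \<and>
     (\<forall>b. (c, b) \<notin> T) \<and>
     (\<forall>a\<in>PiE D A. (a, c) \<in> T\<^sup>*)"

definition tree_resistance :: "'p set \<Rightarrow> ('p \<Rightarrow> ('p \<Rightarrow> 'a) \<Rightarrow> real) \<Rightarrow> (('p \<Rightarrow> 'a) \<times> ('p \<Rightarrow> 'a)) set \<Rightarrow> real" where
  "tree_resistance D U T = (\<Sum>(a,b)\<in>T. resistance D U a b)"

end

theory Submission
  imports Defs
begin

lemma dev_sym: "dev_player D a b = dev_player D b a"
  unfolding dev_player_def by (metis)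

lemma edge_sym: "is_edge D A a b \<Longrightarrow> is_edge D A b a"
  unfolding is_edge_def by metis

lemma reach_aux:
  assumes "(x,y) \<in> T\<^sup>*" and "T' = insert (c,a) (T - {(a,c)})"
  shows "(x,y) \<in> T'\<^sup>* \<or> (x,a) \<in> T'\<^sup>*"
  using assms(1)
proof (induction rule: rtrancl_induct)
  case base then show ?case by simp
next
  case (step y z)
  show ?case
  proof (cases "(y,z) = (a,c)")
    case True
    then show ?thesis using step by auto
  next
    case False
    then have "(y,z) \<in> T'" using step assms(2) by auto
    then show ?thesis using step by (meson rtrancl.rtrancl_into_rtrancl)
  qed
qed

theorem lemma9:
  fixes D :: "'p set" and A :: "'p \<Rightarrow> 'a set" and U :: "'p \<Rightarrow> ('p \<Rightarrow> 'a) \<Rightarrow> real"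
    and c :: "'p \<Rightarrow> 'a" and T :: "(('p \<Rightarrow> 'a) \<times> ('p \<Rightarrow> 'a)) set"
  assumes "finite D"
    and "\<forall>i\<in>D. finite (A i)"
    and "card (PiE D A) \<ge> 2"
    and "spanning_tree D A c T"
    and "\<forall>c' T'. spanning_tree D A c' T' \<longrightarrow> tree_resistance D U T \<le> tree_resistance D U T'"
  shows "\<exists>(a,b)\<in>T. resistance D U a b = 0"
proof -
  let ?X = "PiE D A"
  have finX: "finite ?X" using assms(1,2) by (simp add: finite_PiE)
  note st = assms(4)[unfolded spanning_tree_def]
  have cX: "c \<in> ?X" using st by blast
  obtain x where x: "x \<in> ?X" "x \<noteq> c"
  proof -
    have "\<not> ?X \<subseteq> {c}"
    proof
      assume "?X \<subseteq> {c}"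
      then have "card ?X \<le> card {c}" by (intro card_mono) auto
      then show False using assms(3) by simp
    qed
    then show ?thesis using that by blast
  qed
  have "(x,c) \<in> T\<^sup>*" using st x by blast
  then have "(x,c) \<in> T\<^sup>+" using x(2) by (meson rtranclD)
  then obtain a where a: "(x,a) \<in> T\<^sup>*" "(a,c) \<in> T" by (meson tranclD2)
  have eac: "is_edge D A a c" using st a(2) by blast
  have aX: "a \<in> ?X" and anc: "a \<noteq> c" using eac unfolding is_edge_def by auto
  show ?thesis
  proof (rule ccontr)
    assume H: "\<not> ?thesis"
    then have "resistance D U a c \<noteq> 0" using a(2) by blast
    moreover have "resistance D U a c \<ge> 0" unfolding resistance_def by simp
    ultimately have Rpos: "resistance D U a c > 0" by linarith
    have Rca: "resistance D U c a = 0"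
      using Rpos unfolding resistance_def by (simp add: dev_sym[of D c a])
    define T' where "T' = insert (c,a) (T - {(a,c)})"
    have TX: "T \<subseteq> ?X \<times> ?X" using st unfolding is_edge_def by auto
    have finT: "finite T" using TX finX by (meson finite_SigmaI rev_finite_subset)
    have caT: "(c,a) \<notin> T" using st by blast
    have "tree_resistance D U T' = tree_resistance D U (T - {(a,c)}) + resistance D U c a"
      unfolding tree_resistance_def T'_def using finT caT by (simp add: sum.insert)
    also have "tree_resistance D U (T - {(a,c)}) = tree_resistance D U T - resistance D U a c"
      unfolding tree_resistance_def using finT a(2) by (simp add: sum_diff1)
    finally have lt: "tree_resistance D U T' < tree_resistance D U T" using Rpos Rca by simp
    have uniq_a: "\<And>b. (a,b) \<in> T \<Longrightarrow> b = c" using st aX anc a(2) by blast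
    have "spanning_tree D A a T'"
      unfolding spanning_tree_def
    proof (intro conjI ballI allI)
      show "a \<in> ?X" by (rule aX)
    next
      fix e assume "e \<in> T'"
      then show "case e of (x,y) \<Rightarrow> is_edge D A x y"
        unfolding T'_def using st edge_sym[OF eac] by auto
    next
      fix y assume y: "y \<in> ?X - {a}"
      show "\<exists>!b. (y,b) \<in> T'"
      proof (cases "y = c")
        case True
        then show ?thesis unfolding T'_def using st anc by auto
      next
        case False
        then obtain b where b: "(y,b) \<in> T" "\<And>b'. (y,b') \<in> T \<Longrightarrow> b' = b" using st y by blast
        show ?thesis unfolding T'_def using b y False by auto
      qed
    next
      fix b show "(a,b) \<notin> T'" unfolding T'_def using uniq_a anc by auto
    next
      fix y assume y: "y \<in> ?X"
      have "(y,c) \<in> T\<^sup>*" using st y by blast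
      from reach_aux[OF this T'_def] show "(y,a) \<in> T'\<^sup>*"
      proof
        assume "(y,c) \<in> T'\<^sup>*"
        moreover have "(c,a) \<in> T'" unfolding T'_def by simp
        ultimately show ?thesis by (meson rtrancl.rtrancl_into_rtrancl)
      qed
    qed
    then have "tree_resistance D U T \<le> tree_resistance D U T'" using assms(5) by blast
    then show False using lt by simp
  qed
qed

end
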